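(* Let $(X,\le,\to,\rightsquigarrow,d,u)$ be a weakly involutive unital quantum B-algebra and let $(\exists,\forall)$ be a pair of strong synchronized maps on $X$ such that $\exists$ is a weak existential quantifier (equivalently, $\forall$ is a weak universal quantifier). Then for all $x,y\in X$, and with each identity holding also when $\to$ is replaced by $\rightsquigarrow$ throughout: (1) $\exists(\forall x\to y)=\forall x\to\exists y$; (2) $\exists(x\to\forall y)=\forall x\to\forall y$; (3) $\exists(\exists x\to y)=\exists x\to\exists y$; (4) $\forall(\exists x\to y)=\exists x\to\forall y$; (5) $\forall(x\to\exists y)=\exists x\to\exists y$; (6) $\forall(\forall x\to y)=\forall x\to\forall y$; (7) $\forall(x\to\forall y)=\exists x\to\forall y$.
   Context: A quantum B-algebra is a partially ordered set $(X,\le)$ with two binary operations $\to$ and $\rightsquigarrow$ such that for all $x,y,z\in X$: $y\to z\le (x\to y)\to(x\to z)$; $y\rightsquigarrow z\le (x\rightsquigarrow y)\to(x\rightsquigarrow z)$; $y\le z$ implies $x\to y\le x\to z$; and $x\le y\to z$ iff $y\le x\rightsquigarrow z$. It is unital if there is $u\in X$ with $u\to x=u\rightsquigarrow x=x$ for all $x$. A pointed quantum B-algebra has a fixed $d\in X$; write $x^{-}=x\to d$, $x^{\sim}=x\rightsquigarrow d$; it is weakly involutive if $(x^{-})^{\sim}=(x^{\sim})^{-}=x$ for all $x$. In a weakly involutive quantum B-algebra define $x\odot y=(x\to y^{-})^{\sim}$ $(=(y\rightsquigarrow x^{\sim})^{-})$ and $x\oplus y=y^{\sim}\to x$ $(=x^{-}\rightsquigarrow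 y)$. A map $\tau:X\to X$ is good if $(\tau(x^{-}))^{\sim}=(\tau(x^{\sim}))^{-}$ for all $x$; good maps $\tau,\sigma$ are synchronized if $\sigma(x)=(\tau(x^{-}))^{\sim}=(\tau(x^{\sim}))^{-}$ for all $x$; they are strong synchronized if moreover $\tau\circ\sigma=\sigma$ (which for synchronized maps is equivalent to $\sigma\circ\tau=\tau$). A good map $\exists$ is a weak existential quantifier if for all $x,y$: $\exists d=d$; $\exists u=u$; $x\le\exists x$; $\exists(x\oplus\exists y)=\exists(\exists x\oplus y)=\exists x\oplus\exists y$; $\exists(x\oplus x)=\exists x\oplus\exists x$; $\exists(x\odot\exists y)=\exists(\exists x\odot y)=\exists x\odot\exists y$. A good map $\forall$ is a weak universal quantifier if for all $x,y$: $\forall u=u$; $\forall d=d$; $\forall x\le x$; $\forall(x\odot\forall y)=\forall(\forall x\odot y)=\forall x\odot\forall y$; $\forall(x\odot x)=\forall x\odot\forall x$; $\forall(x\oplus\forall y)=\forall(\forall x\oplus y)=\forall x\oplus\forall y$. *)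

theory Defs
  imports Main
begin

definition quantum_B_algebra :: "('a::order \<Rightarrow> 'a \<Rightarrow> 'a) \<Rightarrow> ('a \<Rightarrow> 'a \<Rightarrow> 'a) \<Rightarrow> bool" where
  "quantum_B_algebra imp rimp \<longleftrightarrow>
     (\<forall>x y z. imp y z \<le> imp (imp x y) (imp x z)) \<and>
     (\<forall>x y z. rimp y z \<le> imp (rimp x y) (rimp x z)) \<and>
     (\<forall>x y z. y \<le> z \<longrightarrow> imp x y \<le> imp x z) \<and>
     (\<forall>x y z. x \<le> imp y z \<longleftrightarrow> y \<le> rimp x z)"

definition unit_of :: "('a \<Rightarrow> 'a \<Rightarrow> 'a) \<Rightarrow> ('a \<Rightarrow> 'a \<Rightarrow> 'a) \<Rightarrow> 'a \<Rightarrow> bool" where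
  "unit_of imp rimp u \<longleftrightarrow> (\<forall>x. imp u x = x \<and> rimp u x = x)"

definition weakly_involutive :: "('a \<Rightarrow> 'a \<Rightarrow> 'a) \<Rightarrow> ('a \<Rightarrow> 'a \<Rightarrow> 'a) \<Rightarrow> 'a \<Rightarrow> bool" where
  "weakly_involutive imp rimp d \<longleftrightarrow> (\<forall>x. rimp (imp x d) d = x \<and> imp (rimp x d) d = x)"

definition qodot :: "('a \<Rightarrow> 'a \<Rightarrow> 'a) \<Rightarrow> ('a \<Rightarrow> 'a \<Rightarrow> 'a) \<Rightarrow> 'a \<Rightarrow> 'a \<Rightarrow> 'a \<Rightarrow> 'a" where
  "qodot imp rimp d x y = rimp (imp x (imp y d)) d"

definition qoplus :: "('a \<Rightarrow> 'a \<Rightarrow> 'a) \<Rightarrow> ('a \<Rightarrow> 'a \<Rightarrow> 'a) \<Rightarrow> 'a \<Rightarrow> 'a \<Rightarrow> 'a \<Rightarrow> 'a" where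
  "qoplus imp rimp d x y = imp (rimp y d) x"

definition good_map :: "('a \<Rightarrow> 'a \<Rightarrow> 'a) \<Rightarrow> ('a \<Rightarrow> 'a \<Rightarrow> 'a) \<Rightarrow> 'a \<Rightarrow> ('a \<Rightarrow> 'a) \<Rightarrow> bool" where
  "good_map imp rimp d \<tau> \<longleftrightarrow> (\<forall>x. rimp (\<tau> (imp x d)) d = imp (\<tau> (rimp x d)) d)"

definition synchronized :: "('a \<Rightarrow> 'a \<Rightarrow> 'a) \<Rightarrow> ('a \<Rightarrow> 'a \<Rightarrow> 'a) \<Rightarrow> 'a \<Rightarrow> ('a \<Rightarrow> 'a) \<Rightarrow> ('a \<Rightarrow> 'a) \<Rightarrow> bool" where
  "synchronized imp rimp d \<tau> \<sigma> \<longleftrightarrow> good_map imp rimp d \<tau> \<and> good_map imp rimp d \<sigma> \<and>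
     (\<forall>x. \<sigma> x = rimp (\<tau> (imp x d)) d \<and> \<sigma> x = imp (\<tau> (rimp x d)) d)"

definition strong_synchronized :: "('a \<Rightarrow> 'a \<Rightarrow> 'a) \<Rightarrow> ('a \<Rightarrow> 'a \<Rightarrow> 'a) \<Rightarrow> 'a \<Rightarrow> ('a \<Rightarrow> 'a) \<Rightarrow> ('a \<Rightarrow> 'a) \<Rightarrow> bool" where
  "strong_synchronized imp rimp d \<tau> \<sigma> \<longleftrightarrow> synchronized imp rimp d \<tau> \<sigma> \<and> \<tau> \<circ> \<sigma> = \<sigma>"

definition weak_exists_quantifier :: "('a::order \<Rightarrow> 'a \<Rightarrow> 'a) \<Rightarrow> ('a \<Rightarrow> 'a \<Rightarrow> 'a) \<Rightarrow> 'a \<Rightarrow> 'a \<Rightarrow> ('a \<Rightarrow> 'a) \<Rightarrow> bool" where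
  "weak_exists_quantifier imp rimp d u E \<longleftrightarrow> good_map imp rimp d E \<and> E d = d \<and> E u = u \<and>
     (\<forall>x. x \<le> E x) \<and>
     (\<forall>x y. E (qoplus imp rimp d x (E y)) = qoplus imp rimp d (E x) (E y) \<and>
            E (qoplus imp rimp d (E x) y) = qoplus imp rimp d (E x) (E y)) \<and>
     (\<forall>x. E (qoplus imp rimp d x x) = qoplus imp rimp d (E x) (E x)) \<and>
     (\<forall>x y. E (qodot imp rimp d x (E y)) = qodot imp rimp d (E x) (E y) \<and>
            E (qodot imp rimp d (E x) y) = qodot imp rimp d (E x) (E y))"

definition weak_forall_quantifier :: "('a::order \<Rightarrow> 'a \<Rightarrow> 'a) \<Rightarrow> ('a \<Rightarrow> 'a \<Rightarrow> 'a) \<Rightarrow> 'a \<Rightarrow> 'a \<Rightarrow> ('a \<Rightarrow> 'a) \<Rightarrow> bool" where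
  "weak_forall_quantifier imp rimp d u A \<longleftrightarrow> good_map imp rimp d A \<and> A u = u \<and> A d = d \<and>
     (\<forall>x. A x \<le> x) \<and>
     (\<forall>x y. A (qodot imp rimp d x (A y)) = qodot imp rimp d (A x) (A y) \<and>
            A (qodot imp rimp d (A x) y) = qodot imp rimp d (A x) (A y)) \<and>
     (\<forall>x. A (qodot imp rimp d x x) = qodot imp rimp d (A x) (A x)) \<and>
     (\<forall>x y. A (qoplus imp rimp d x (A y)) = qoplus imp rimp d (A x) (A y) \<and>
            A (qoplus imp rimp d (A x) y) = qoplus imp rimp d (A x) (A y))"

end

theory Submission
  imports Defs
begin

lemma qb_swap_plus:
  fixes imp rimp :: "'a::order \<Rightarrow> 'a \<Rightarrow> 'a" and d :: 'a
  assumes Q: "quantum_B_algebra imp rimp" and W: "weakly_involutive imp rimp d"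
  shows "imp (rimp y d) x = rimp (imp x d) y"
proof -
  have ax1: "\<And>x y z. imp y z \<le> imp (imp x y) (imp x z)" using Q unfolding quantum_B_algebra_def by blast
  have ax2: "\<And>x y z. rimp y z \<le> imp (rimp x y) (rimp x z)" using Q unfolding quantum_B_algebra_def by blast
  have adj: "\<And>x y z. x \<le> imp y z \<longleftrightarrow> y \<le> rimp x z" using Q unfolding quantum_B_algebra_def by blast
  have tn: "\<And>x. rimp (imp x d) d = x" and nt: "\<And>x. imp (rimp x d) d = x"
    using W unfolding weakly_involutive_def by auto
  have i: "\<And>y z. y \<le> imp (rimp y z) z" using adj by blast
  have ii: "\<And>x z. x \<le> rimp (imp x z) z" using adj by blast
  have C1: "\<And>a b. imp a b \<le> rimp (imp b d) (imp a d)" using adj ax1 by blast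
  have C2: "\<And>a b. rimp a b \<le> rimp (rimp b d) (rimp a d)" using adj ax2 by blast
  have P: "\<And>a b. imp a b \<le> rimp a b"
  proof -
    fix a b
    have "imp a b \<le> rimp (imp b d) (imp a d)" by (rule C1)
    also have "\<dots> \<le> rimp (rimp (imp a d) d) (rimp (imp b d) d)" by (rule C2)
    finally show "imp a b \<le> rimp a b" by (simp add: tn)
  qed
  have swap: "\<And>x y z. imp x (rimp y z) = rimp y (imp x z)"
  proof -
    fix x y z
    have "y \<le> imp (imp x (rimp y z)) (imp x z)" using i[of y z] ax1[of "rimp y z" z x] by (rule order_trans)
    hence 1: "imp x (rimp y z) \<le> rimp y (imp x z)" using adj by blast
    have "x \<le> imp (rimp y (imp x z)) (rimp y z)" using ii[of x z] ax2[of "imp x z" z y] by (rule order_trans)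
    also have "\<dots> \<le> rimp (rimp y (imp x z)) (rimp y z)" by (rule P)
    finally have "rimp y (imp x z) \<le> imp x (rimp y z)" using adj by blast
    with 1 show "imp x (rimp y z) = rimp y (imp x z)" by (rule antisym)
  qed
  have "imp (rimp y d) x = imp (rimp y d) (rimp (imp x d) d)" by (simp add: tn)
  also have "\<dots> = rimp (imp x d) (imp (rimp y d) d)" by (rule swap)
  also have "\<dots> = rimp (imp x d) y" by (simp add: nt)
  finally show ?thesis .
qed

theorem proposition5p11:
  fixes imp rimp :: "'a::order \<Rightarrow> 'a \<Rightarrow> 'a" and d u :: 'a and E A :: "'a \<Rightarrow> 'a"
  assumes "quantum_B_algebra imp rimp"
    and "unit_of imp rimp u"
    and "weakly_involutive imp rimp d"
    and "strong_synchronized imp rimp d E A"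
    and "weak_exists_quantifier imp rimp d u E"
  shows "\<forall>x y.
     E (imp (A x) y) = imp (A x) (E y) \<and> E (rimp (A x) y) = rimp (A x) (E y) \<and>
     E (imp x (A y)) = imp (A x) (A y) \<and> E (rimp x (A y)) = rimp (A x) (A y) \<and>
     E (imp (E x) y) = imp (E x) (E y) \<and> E (rimp (E x) y) = rimp (E x) (E y) \<and>
     A (imp (E x) y) = imp (E x) (A y) \<and> A (rimp (E x) y) = rimp (E x) (A y) \<and>
     A (imp x (E y)) = imp (E x) (E y) \<and> A (rimp x (E y)) = rimp (E x) (E y) \<and>
     A (imp (A x) y) = imp (A x) (A y) \<and> A (rimp (A x) y) = rimp (A x) (A y) \<and>
     A (imp x (A y)) = imp (E x) (A y) \<and> A (rimp x (A y)) = rimp (E x) (A y)"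
proof -
  define n where "n = (\<lambda>a. imp a d)"
  define t where "t = (\<lambda>a. rimp a d)"
  define pl where "pl = qoplus imp rimp d"
  define od where "od = qodot imp rimp d"
  have tn: "\<And>x. t (n x) = x" and nt: "\<And>x. n (t x) = x"
    using assms(3) unfolding weakly_involutive_def n_def t_def by auto
  have alt: "\<And>x y. imp (t y) x = rimp (n x) y"
    using qb_swap_plus[OF assms(1,3)] unfolding n_def t_def by blast
  have pl1: "\<And>a b. pl a b = imp (t b) a" unfolding pl_def qoplus_def t_def by simp
  have pl2: "\<And>a b. pl a b = rimp (n a) b" using pl1 alt by simp
  have od1: "\<And>a b. od a b = t (imp a (n b))" unfolding od_def qodot_def t_def n_def by simp
  have K2: "\<And>a b. rimp a b = imp (t b) (t a)" by (simp add: alt nt)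
  have impK: "\<And>a b. imp a b = pl b (n a)" by (simp add: pl1 tn)
  have rimpK: "\<And>a b. rimp a b = pl (t a) b" by (simp add: pl2 nt)
  have odK: "\<And>a b. t (imp a b) = od a (t b)" by (simp add: od1 nt)
  have impod: "\<And>a b. imp a b = n (od a (t b))" by (simp add: odK[symmetric] nt)
  have At: "\<And>z. A z = t (E (n z))" and An: "\<And>z. A z = n (E (t z))"
    using assms(4) unfolding strong_synchronized_def synchronized_def n_def t_def by blast+
  have EA: "\<And>z. E (A z) = A z" using assms(4) unfolding strong_synchronized_def
    by (metis comp_apply)
  have En: "\<And>z. E (n z) = n (A z)" by (simp add: At nt)
  have Et: "\<And>z. E (t z) = t (A z)" by (simp add: An tn)
  have AE: "\<And>z. A (E z) = E z"
  proof -
    fix z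
    have e1: "E z = n (A (t z))" using En[of "t z"] by (simp add: nt)
    hence e2: "t (E z) = A (t z)" by (simp add: tn)
    show "A (E z) = E z" using An[of "E z"] EA[of "t z"] e1 e2 by simp
  qed
  have nE: "\<And>z. E (n (E z)) = n (E z)" by (simp add: En AE)
  have tE: "\<And>z. E (t (E z)) = t (E z)" by (simp add: Et AE)
  have Ant: "\<And>z. A (t z) = t (E z)" by (simp add: At nt)
  have Q: "\<And>x y. E (pl x (E y)) = pl (E x) (E y) \<and> E (pl (E x) y) = pl (E x) (E y)"
    and O: "\<And>x y. E (od x (E y)) = od (E x) (E y) \<and> E (od (E x) y) = od (E x) (E y)"
    using assms(5) unfolding weak_exists_quantifier_def pl_def od_def by auto
  have g1: "\<And>x y. E (imp (A x) y) = imp (A x) (E y)"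
  proof -
    fix x y
    have "E (imp (A x) y) = E (pl y (E (n x)))" by (simp add: impK En)
    also have "\<dots> = pl (E y) (E (n x))" using Q by blast
    also have "\<dots> = imp (A x) (E y)" by (simp add: pl1 At[of x])
    finally show "E (imp (A x) y) = imp (A x) (E y)" .
  qed
  have g2: "\<And>x y. E (rimp (A x) y) = rimp (A x) (E y)"
  proof -
    fix x y
    have "E (rimp (A x) y) = E (pl (E (t x)) y)" by (simp add: rimpK Et)
    also have "\<dots> = pl (E (t x)) (E y)" using Q by blast
    also have "\<dots> = rimp (A x) (E y)" by (simp add: pl2 An[of x])
    finally show "E (rimp (A x) y) = rimp (A x) (E y)" .
  qed
  have g3: "\<And>x y. E (imp x (A y)) = imp (A x) (A y)"
  proof -
    fix x y
    have "E (imp x (A y)) = E (pl (E (A y)) (n x))" by (simp add: impK EA)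
    also have "\<dots> = pl (E (A y)) (E (n x))" using Q by blast
    also have "\<dots> = imp (A x) (A y)" by (simp add: pl1 At[of x] EA)
    finally show "E (imp x (A y)) = imp (A x) (A y)" .
  qed
  have g4: "\<And>x y. E (rimp x (A y)) = rimp (A x) (A y)"
  proof -
    fix x y
    have "E (rimp x (A y)) = E (pl (t x) (E (A y)))" by (simp add: rimpK EA)
    also have "\<dots> = pl (E (t x)) (E (A y))" using Q by blast
    also have "\<dots> = rimp (A x) (A y)" by (simp add: pl2 An[of x] EA)
    finally show "E (rimp x (A y)) = rimp (A x) (A y)" .
  qed
  have g5: "\<And>x y. E (imp (E x) y) = imp (E x) (E y)"
  proof -
    fix x y
    have "E (imp (E x) y) = E (pl y (E (n (E x))))" by (simp add: impK nE)
    also have "\<dots> = pl (E y) (E (n (E x)))" using Q by blast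
    also have "\<dots> = imp (E x) (E y)" by (simp add: pl1 nE tn)
    finally show "E (imp (E x) y) = imp (E x) (E y)" .
  qed
  have g6: "\<And>x y. E (rimp (E x) y) = rimp (E x) (E y)"
  proof -
    fix x y
    have "E (rimp (E x) y) = E (pl (E (t (E x))) y)" by (simp add: rimpK tE)
    also have "\<dots> = pl (E (t (E x))) (E y)" using Q by blast
    also have "\<dots> = rimp (E x) (E y)" by (simp add: pl2 tE nt)
    finally show "E (rimp (E x) y) = rimp (E x) (E y)" .
  qed
  have g7: "\<And>x y. A (imp (E x) y) = imp (E x) (A y)"
  proof -
    fix x y
    have "A (imp (E x) y) = n (E (od (E x) (t y)))" using An[of "imp (E x) y"] odK by simp
    also have "\<dots> = n (od (E x) (t (A y)))" using O[of x "t y"] Et[of y] by simp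
    also have "\<dots> = imp (E x) (A y)" by (simp add: impod)
    finally show "A (imp (E x) y) = imp (E x) (A y)" .
  qed
  have g9: "\<And>x y. A (imp x (E y)) = imp (E x) (E y)"
  proof -
    fix x y
    have "A (imp x (E y)) = n (E (od x (t (E y))))" using An[of "imp x (E y)"] odK by simp
    also have "\<dots> = n (od (E x) (t (E y)))" using O[of x "t (E y)"] tE[of y] by simp
    also have "\<dots> = imp (E x) (E y)" by (simp add: impod)
    finally show "A (imp x (E y)) = imp (E x) (E y)" .
  qed
  have g11: "\<And>x y. A (imp (A x) y) = imp (A x) (A y)"
  proof -
    fix x y
    have "A (imp (A x) y) = n (E (od (A x) (t y)))" using An[of "imp (A x) y"] odK by simp
    also have "\<dots> = n (od (A x) (t (A y)))" using O[of "A x" "t y"] EA[of x] Et[of y] by simp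
    also have "\<dots> = imp (A x) (A y)" by (simp add: impod)
    finally show "A (imp (A x) y) = imp (A x) (A y)" .
  qed
  have g13: "\<And>x y. A (imp x (A y)) = imp (E x) (A y)"
  proof -
    fix x y
    have "A (imp x (A y)) = n (E (od x (t (A y))))" using An[of "imp x (A y)"] odK by simp
    also have "\<dots> = n (od (E x) (t (A y)))" using O[of x "t y"] Et[of y] by simp
    also have "\<dots> = imp (E x) (A y)" by (simp add: impod)
    finally show "A (imp x (A y)) = imp (E x) (A y)" .
  qed
  have g8: "\<And>x y. A (rimp (E x) y) = rimp (E x) (A y)"
  proof -
    fix x y
    have "A (rimp (E x) y) = A (imp (t y) (E (t (E x))))" by (simp add: K2 tE Et Ant AE)
    also have "\<dots> = imp (E (t y)) (E (t (E x)))" by (rule g9)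
    also have "\<dots> = rimp (E x) (A y)" by (simp add: K2 tE Et Ant AE)
    finally show "A (rimp (E x) y) = rimp (E x) (A y)" .
  qed
  have g10: "\<And>x y. A (rimp x (E y)) = rimp (E x) (E y)"
  proof -
    fix x y
    have "A (rimp x (E y)) = A (imp (E (t (E y))) (t x))" by (simp add: K2 tE Et Ant AE)
    also have "\<dots> = imp (E (t (E y))) (A (t x))" by (rule g7)
    also have "\<dots> = rimp (E x) (E y)" by (simp add: K2 tE Et Ant AE)
    finally show "A (rimp x (E y)) = rimp (E x) (E y)" .
  qed
  have g12: "\<And>x y. A (rimp (A x) y) = rimp (A x) (A y)"
  proof -
    fix x y
    have "A (rimp (A x) y) = A (imp (t y) (E (t x)))" by (simp add: K2 tE Et Ant AE)
    also have "\<dots> = imp (E (t y)) (E (t x))" by (rule g9)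
    also have "\<dots> = rimp (A x) (A y)" by (simp add: K2 tE Et Ant AE)
    finally show "A (rimp (A x) y) = rimp (A x) (A y)" .
  qed
  have g14: "\<And>x y. A (rimp x (A y)) = rimp (E x) (A y)"
  proof -
    fix x y
    have "A (rimp x (A y)) = A (imp (E (t y)) (t x))" by (simp add: K2 tE Et Ant AE)
    also have "\<dots> = imp (E (t y)) (A (t x))" by (rule g7)
    also have "\<dots> = rimp (E x) (A y)" by (simp add: K2 tE Et Ant AE)
    finally show "A (rimp x (A y)) = rimp (E x) (A y)" .
  qed
  show ?thesis by (intro allI conjI g1 g2 g3 g4 g5 g6 g7 g8 g9 g10 g11 g12 g13 g14)
qed

end
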